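(* Let $I_0$ be an interval and let $\{f_k\}_{k\ge0}$ be a $C^1$-uniformly equicontinuous and $C^1$-uniformly bounded sequence of $C^1$ maps $f_k:I_0\to I_0$ with $p=\sup_k\#\mathcal{C}_k<\infty$, and let $\lambda>0$. Given $\gamma>0$, there exists $\varepsilon>0$ such that for every $n\in\mathbb{N}$ and every $x\in Y_n(\lambda)$, $$\frac1n\sum_{j=0}^{n-1}\chi_{V_\varepsilon\mathcal{C}_j}(f^j(x))<\gamma.$$ Moreover, $\varepsilon$ does not depend on $n$; it depends on $\lambda$, on the modulus of uniform equicontinuity of $\{f_k\}$ and on the uniform bound $\Gamma$ of $\{Df_k\}$.
   Context: $\mathcal{C}_k$ is the set of critical points of $f_k$; $f^j=f_{j-1}\circ\cdots\circ f_0$, $f^0=\mathrm{id}$. $Y_n(\lambda)=\{x\in I_0:\frac1n\log|Df^n(x)|>\lambda\}$. $V_\varepsilon\mathcal{C}_k$ is the union of the balls $B(c,\varepsilon)$ over $c\in\mathcal{C}_k$, and $\chi$ denotes the indicator function. $C^1$-uniformly equicontinuous: for every $\zeta>0$ there is $\varepsilon>0$ such that $|x-y|<\varepsilon$ implies $|f_k(x)-f_k(y)|<\zeta$ and $|Df_k(x)-Df_k(y)|<\zeta$ for all $k$. $C^1$-uniformly bounded: there is $\Gamma>0$ with $|f_k(x)|,|Df_k(x)|\le\Gamma$ for all $x,k$. *)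

theory Defs
  imports "HOL-Analysis.Analysis"
begin

fun fiter :: "(nat \<Rightarrow> real \<Rightarrow> real) \<Rightarrow> nat \<Rightarrow> real \<Rightarrow> real" where
  "fiter f 0 = id"
| "fiter f (Suc j) = f j \<circ> fiter f j"

text \<open>Critical points of f_k on I0 (Df k is the derivative of f k).\<close>
definition crit :: "real set \<Rightarrow> (nat \<Rightarrow> real \<Rightarrow> real) \<Rightarrow> nat \<Rightarrow> real set" where
  "crit I0 Df k = {x \<in> I0. Df k x = 0}"

text \<open>Derivative of f^n at x, given by the chain rule.\<close>
definition Dfiter :: "(nat \<Rightarrow> real \<Rightarrow> real) \<Rightarrow> (nat \<Rightarrow> real \<Rightarrow> real) \<Rightarrow> nat \<Rightarrow> real \<Rightarrow> real" where
  "Dfiter f Df n x = (\<Prod>j<n. Df j (fiter f j x))"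

definition Yset :: "real set \<Rightarrow> (nat \<Rightarrow> real \<Rightarrow> real) \<Rightarrow> (nat \<Rightarrow> real \<Rightarrow> real) \<Rightarrow> nat \<Rightarrow> real \<Rightarrow> real set" where
  "Yset I0 f Df n lam = {x \<in> I0. (1 / real n) * ln \<bar>Dfiter f Df n x\<bar> > lam}"

definition nbhd :: "real set \<Rightarrow> real \<Rightarrow> real set" where
  "nbhd C e = (\<Union>c\<in>C. ball c e)"

end

theory Submission
  imports Defs
begin

lemma fiter_in:
  assumes "\<And>k. f k ` I0 \<subseteq> I0" "x \<in> I0"
  shows "fiter f j x \<in> I0"
  using assms by (induction j) auto

theorem lemma4p3:
  fixes I0 :: "real set" and f Df :: "nat \<Rightarrow> real \<Rightarrow> real" and lam :: real
  assumes interval: "is_interval I0" "interior I0 \<noteq> {}"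
    and maps: "\<And>k. f k ` I0 \<subseteq> I0"
    and deriv: "\<And>k x. x \<in> I0 \<Longrightarrow> (f k has_real_derivative Df k x) (at x within I0)"
    and C1: "\<And>k. continuous_on I0 (Df k)"
    and equicont: "\<And>\<zeta>. \<zeta> > 0 \<Longrightarrow> \<exists>\<epsilon>>0. \<forall>k. \<forall>x\<in>I0. \<forall>y\<in>I0. \<bar>x - y\<bar> < \<epsilon> \<longrightarrow>
                     \<bar>f k x - f k y\<bar> < \<zeta> \<and> \<bar>Df k x - Df k y\<bar> < \<zeta>"
    and bounded: "\<exists>\<Gamma>>0. \<forall>k. \<forall>x\<in>I0. \<bar>f k x\<bar> \<le> \<Gamma> \<and> \<bar>Df k x\<bar> \<le> \<Gamma>"
    and crit_fin: "\<exists>p::nat. \<forall>k. finite (crit I0 Df k) \<and> card (crit I0 Df k) \<le> p"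
    and lam: "lam > 0"
  shows "\<forall>\<gamma>>0. \<exists>\<epsilon>>0. \<forall>n\<ge>1. \<forall>x \<in> Yset I0 f Df n lam.
           (1 / real n) * (\<Sum>j<n. indicator (nbhd (crit I0 Df j) \<epsilon>) (fiter f j x)) < \<gamma>"
proof (intro allI impI)
  fix \<gamma> :: real assume g: "\<gamma> > 0"
  obtain \<Gamma> where G: "\<Gamma> > 0" "\<forall>k. \<forall>x\<in>I0. \<bar>Df k x\<bar> \<le> \<Gamma>" using bounded by blast
  define L where "L = ln (max \<Gamma> 1)"
  have L0: "L \<ge> 0" unfolding L_def by simp
  define K where "K = (L + 1) / \<gamma>"
  have K0: "K > 0" unfolding K_def using L0 g by simp
  obtain \<epsilon> where e: "\<epsilon> > 0" and eq: "\<forall>k. \<forall>x\<in>I0. \<forall>y\<in>I0. \<bar>x - y\<bar> < \<epsilon> \<longrightarrow>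
                     \<bar>Df k x - Df k y\<bar> < exp (-K)"
    using equicont[of "exp (-K)"] by auto
  show "\<exists>\<epsilon>>0. \<forall>n\<ge>1. \<forall>x \<in> Yset I0 f Df n lam.
           (1 / real n) * (\<Sum>j<n. indicator (nbhd (crit I0 Df j) \<epsilon>) (fiter f j x)) < \<gamma>"
  proof (intro exI[of _ \<epsilon>] conjI allI impI ballI e)
    fix n :: nat and x assume n: "n \<ge> 1" and x: "x \<in> Yset I0 f Df n lam"
    have xI: "x \<in> I0" and hx: "(1 / real n) * ln \<bar>Dfiter f Df n x\<bar> > lam"
      using x unfolding Yset_def by auto
    define m where "m = (\<Sum>j<n. indicator (nbhd (crit I0 Df j) \<epsilon>) (fiter f j x) :: real)"
    have nz: "Dfiter f Df n x \<noteq> 0"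
    proof
      assume "Dfiter f Df n x = 0"
      then show False using hx lam by simp
    qed
    then have nzj: "Df j (fiter f j x) \<noteq> 0" if "j < n" for j
      using that unfolding Dfiter_def by auto
    have lnsum: "ln \<bar>Dfiter f Df n x\<bar> = (\<Sum>j<n. ln \<bar>Df j (fiter f j x)\<bar>)"
      unfolding Dfiter_def abs_prod by (rule ln_prod) (use nzj in auto)
    have tm: "ln \<bar>Df j (fiter f j x)\<bar> \<le> L - (L + K) * indicator (nbhd (crit I0 Df j) \<epsilon>) (fiter f j x)"
      if j: "j < n" for j
    proof -
      have yI: "fiter f j x \<in> I0" using fiter_in[OF maps xI] .
      have pos: "\<bar>Df j (fiter f j x)\<bar> > 0" using nzj[OF j] by simp
      show ?thesis
      proof (cases "fiter f j x \<in> nbhd (crit I0 Df j) \<epsilon>")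
        case True
        then obtain c where c: "c \<in> I0" "Df j c = 0" "dist c (fiter f j x) < \<epsilon>"
          unfolding nbhd_def crit_def by auto
        have "\<bar>Df j (fiter f j x) - Df j c\<bar> < exp (-K)"
        proof -
          have "\<bar>fiter f j x - c\<bar> < \<epsilon>" using c(3) by (simp add: dist_real_def abs_minus_commute)
          then show ?thesis using eq yI c(1) by blast
        qed
        then have "\<bar>Df j (fiter f j x)\<bar> < exp (-K)" using c by simp
        then have "ln \<bar>Df j (fiter f j x)\<bar> < -K"
          using pos by (metis ln_exp ln_less_cancel_iff exp_gt_zero)
        then show ?thesis using True by simp
      next
        case False
        have "\<bar>Df j (fiter f j x)\<bar> \<le> max \<Gamma> 1" using G(2) yI by (meson max.coboundedI1)
        then have "ln \<bar>Df j (fiter f j x)\<bar> \<le> L" unfolding L_def using pos by simp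
        then show ?thesis using False by simp
      qed
    qed
    have "ln \<bar>Dfiter f Df n x\<bar> \<le> (\<Sum>j<n. L - (L + K) * indicator (nbhd (crit I0 Df j) \<epsilon>) (fiter f j x))"
      unfolding lnsum by (rule sum_mono) (use tm in auto)
    also have "\<dots> = real n * L - (L + K) * m"
      unfolding m_def by (simp add: sum_subtractf sum_distrib_left)
    finally have A: "ln \<bar>Dfiter f Df n x\<bar> \<le> real n * L - (L + K) * m" .
    have npos: "real n > 0" using n by simp
    have "real n * lam < ln \<bar>Dfiter f Df n x\<bar>"
      using hx npos by (simp add: field_simps)
    with A lam npos have B: "(L + K) * m < real n * L"
      by (smt (verit) mult_pos_pos)
    have m0: "m \<ge> 0" unfolding m_def by (simp add: sum_nonneg)
    have "K * m \<le> (L + K) * m" using L0 m0 by (simp add: mult_right_mono)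
    also have "\<dots> < real n * (L + 1)" using B npos by (simp add: algebra_simps)
    finally have "(L + 1) / \<gamma> * m < real n * (L + 1)" unfolding K_def .
    then have "(L + 1) * m < (L + 1) * (\<gamma> * real n)" using g L0 by (simp add: field_simps)
    then have "m < \<gamma> * real n" using L0 by (simp add: mult_less_cancel_left_pos)
    then show "(1 / real n) * m < \<gamma>" using npos by (simp add: field_simps)
  qed
qed

end
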